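(* For all $g,b,n\ge0$ the inverse mapping class monoid satisfies $\mathcal{IM}_{g,b,n}=E\,\mathcal{M}_{g,b,n}$, where $E$ is the set of idempotents of $\mathcal{IM}_{g,b,n}$ and $\mathcal{M}_{g,b,n}$ is the mapping class group of $S_{g,b}$ with the $n$ marked points $Q_n$ (viewed as the group of units of $\mathcal{IM}_{g,b,n}$). In particular $\mathcal{IM}_{g,b,n}$ is factorisable.
   Context: Let $S_{g,b}$ be a compact orientable surface of genus $g$ with $b$ boundary components, and $Q_n$ a fixed set of $n$ interior points. Consider homeomorphisms $f$ of $S_{g,b}$ (fixing the boundary pointwise) together with a subset $\{i_1,\dots,i_k\}\subseteq Q_n$, $0\le k\le n$, that $f$ maps bijectively onto a subset $\{j_1,\dots,j_k\}\subseteq Q_n$. If $h$ maps $\{s_1,\dots,s_l\}\subseteq Q_n$ bijectively onto $\{t_1,\dots,t_l\}\subseteq Q_n$, the composite $h\circ f$ is equipped with the set of those $i_r$ with $f(i_r)\in\{s_1,\dots,s_l\}$. The set of isotopy classes of such maps, with this composition, is the monoid $\mathcal{IM}_{g,b,n}$. $\mathcal M_{g,b,n}$ consists of the classes with $k=n$, i.e. homeomorphisms mapping $Q_n$ bijectively onto itself. A monoid $M$ is called factorisable if $M=EG$ with $E$ the set of idempotents of $M$ and $G$ a subgroup of $M$. *)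

theory Defs
  imports "HOL-Homology.Homology"
begin

definition surface_with_boundary :: "'a topology \<Rightarrow> bool" where
  "surface_with_boundary X \<longleftrightarrow>
     (\<forall>x\<in>topspace X. \<exists>U V. openin X U \<and> x \<in> U \<and>
        openin (top_of_set {z::complex. 0 \<le> Im z}) V \<and>
        (subtopology X U) homeomorphic_space (top_of_set V))"

definition manifold_interior_point :: "'a topology \<Rightarrow> 'a \<Rightarrow> bool" where
  "manifold_interior_point X x \<longleftrightarrow>
     (\<exists>U V. openin X U \<and> x \<in> U \<and> open (V::complex set) \<and>
        (subtopology X U) homeomorphic_space (top_of_set V))"

definition manifold_boundary :: "'a topology \<Rightarrow> 'a set" where
  "manifold_boundary X = {x \<in> topspace X. \<not> manifold_interior_point X x}"

text \<open>Orientability of a compact connected surface: existence of a fundamental class,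
  i.e. the top relative homology group H_2(X, boundary X) is nontrivial.\<close>

definition orientable_surface :: "'a topology \<Rightarrow> bool" where
  "orientable_surface X \<longleftrightarrow>
     carrier (relative_homology_group 2 X (manifold_boundary X))
       \<noteq> {\<one>\<^bsub>relative_homology_group 2 X (manifold_boundary X)\<^esub>}"

text \<open>A compact (connected) orientable surface S_{g,b}, for some genus g and some number b of
  boundary components; by the classification of surfaces these are exactly the S_{g,b}.\<close>

definition compact_orientable_surface :: "'a topology \<Rightarrow> bool" where
  "compact_orientable_surface X \<longleftrightarrow>
     Hausdorff_space X \<and> compact_space X \<and> connected_space X \<and>
     surface_with_boundary X \<and> orientable_surface X"

text \<open>Elements of the inverse mapping class monoid are represented by pairs (f, D):
  f a homeomorphism fixing the boundary pointwise, D a subset of the marked points Q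
  with f mapping D (bijectively, f being injective) into Q.\<close>

type_synonym 'a pmap = "('a \<Rightarrow> 'a) \<times> 'a set"

definition admissible :: "'a topology \<Rightarrow> 'a set \<Rightarrow> 'a pmap \<Rightarrow> bool" where
  "admissible X Q p \<longleftrightarrow>
     homeomorphic_map X X (fst p) \<and>
     (\<forall>x\<in>manifold_boundary X. fst p x = x) \<and>
     snd p \<subseteq> Q \<and> fst p ` snd p \<subseteq> Q"

definition pcomp :: "'a pmap \<Rightarrow> 'a pmap \<Rightarrow> 'a pmap" where
  "pcomp q p = (fst q \<circ> fst p, {d \<in> snd p. fst p d \<in> snd q})"

definition pisotopic :: "'a topology \<Rightarrow> 'a set \<Rightarrow> 'a pmap \<Rightarrow> 'a pmap \<Rightarrow> bool" where
  "pisotopic X Q p q \<longleftrightarrow>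
     snd p = snd q \<and>
     (\<exists>H. continuous_map (prod_topology (top_of_set {0..1::real}) X) X H \<and>
          (\<forall>t\<in>{0..1}. admissible X Q (\<lambda>x. H (t, x), snd p)) \<and>
          (\<forall>x\<in>topspace X. H (0, x) = fst p x \<and> H (1, x) = fst q x))"

text \<open>Idempotents of the monoid, and elements of the mapping class group M_{g,b,n}
  (the case k = n: the homeomorphism maps Q bijectively onto itself).\<close>

definition pidempotent :: "'a topology \<Rightarrow> 'a set \<Rightarrow> 'a pmap \<Rightarrow> bool" where
  "pidempotent X Q e \<longleftrightarrow> admissible X Q e \<and> pisotopic X Q (pcomp e e) e"

definition punit :: "'a topology \<Rightarrow> 'a set \<Rightarrow> 'a pmap \<Rightarrow> bool" where
  "punit X Q u \<longleftrightarrow> admissible X Q u \<and> snd u = Q \<and> fst u ` Q = Q"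

end

theory Submission
  imports Defs
begin


lemma conn_complement:
  assumes X: "connected_space X" and S: "closedin X S"
  and loc: "\<And>x. x \<in> S \<Longrightarrow> \<exists>N C. openin X N \<and> x \<in> N \<and> connectedin X C \<and> C \<subseteq> topspace X - S \<and> N \<subseteq> X closure_of C"
  shows "connectedin X (topspace X - S)"
proof -
  define G where "G = topspace X - S"
  have Go: "openin X G" using S by (simp add: G_def openin_diff)
  { fix E1 E2 assume o1: "openin X E1" and o2: "openin X E2" and cov: "G \<subseteq> E1 \<union> E2"
      and dis: "E1 \<inter> E2 \<inter> G = {}" and n1: "E1 \<inter> G \<noteq> {}" and n2: "E2 \<inter> G \<noteq> {}"
    define P where "P = E1 \<inter> G"
    define R where "R = E2 \<inter> G"
    have Po: "openin X P" and Ro: "openin X R" using o1 o2 Go by (auto simp: P_def R_def)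
    have PR: "P \<inter> R = {}" using dis by (auto simp: P_def R_def)
    have GPR: "G = P \<union> R" using cov by (auto simp: P_def R_def)
    have cP: "R \<inter> X closure_of P = {}" using openin_Int_closure_of_eq_empty[OF Ro] PR by blast
    have cR: "P \<inter> X closure_of R = {}" using openin_Int_closure_of_eq_empty[OF Po] PR by blast
    have side: "C \<subseteq> P \<or> C \<subseteq> R" if "connectedin X C" "C \<subseteq> G" for C
    proof -
      have "\<not>(openin X P \<and> openin X R \<and> C \<subseteq> P \<union> R \<and> P \<inter> R \<inter> C = {} \<and> P \<inter> C \<noteq> {} \<and> R \<inter> C \<noteq> {})"
        using that(1) unfolding connectedin by blast
      then have "\<not>(P \<inter> C \<noteq> {} \<and> R \<inter> C \<noteq> {})" using Po Ro that(2) GPR PR by auto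
      then show ?thesis using that(2) GPR by blast
    qed
    define P' where "P' = topspace X - X closure_of R"
    define R' where "R' = topspace X - X closure_of P"
    have "openin X P'" "openin X R'" by (auto simp: P'_def R'_def)
    moreover have "topspace X \<subseteq> P' \<union> R'"
    proof
      fix x assume x: "x \<in> topspace X"
      show "x \<in> P' \<union> R'"
      proof (cases "x \<in> S")
        case False
        then have "x \<in> P \<or> x \<in> R" using x GPR G_def by blast
        then show ?thesis using cP cR x by (auto simp: P'_def R'_def)
      next
        case True
        then obtain N C where NC: "openin X N" "x \<in> N" "connectedin X C" "C \<subseteq> G" "N \<subseteq> X closure_of C"
          using loc G_def by blast
        from side[OF NC(3,4)] show ?thesis
        proof
          assume "C \<subseteq> P"
          then have "N \<subseteq> X closure_of P" using NC(5) closure_of_mono by blast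
          then have "N \<inter> R = {}" using cP by blast
          then have "x \<notin> X closure_of R" unfolding in_closure_of using NC(1,2) by blast
          then show ?thesis using x by (simp add: P'_def)
        next
          assume "C \<subseteq> R"
          then have "N \<subseteq> X closure_of R" using NC(5) closure_of_mono by blast
          then have "N \<inter> P = {}" using cR by blast
          then have "x \<notin> X closure_of P" unfolding in_closure_of using NC(1,2) by blast
          then show ?thesis using x by (simp add: R'_def)
        qed
      qed
    qed
    moreover have "P' \<inter> R' = {}"
    proof (rule ccontr)
      assume "P' \<inter> R' \<noteq> {}"
      then obtain x where x: "x \<in> topspace X" "x \<notin> X closure_of R" "x \<notin> X closure_of P"
        by (auto simp: P'_def R'_def)
      then obtain M1 M2 where M: "openin X M1" "x \<in> M1" "M1 \<inter> R = {}" "openin X M2" "x \<in> M2" "M2 \<inter> P = {}"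
        unfolding in_closure_of by blast
      show False
      proof (cases "x \<in> S")
        case False then show ?thesis using M x GPR G_def by blast
      next
        case True
        then obtain N C where NC: "openin X N" "x \<in> N" "connectedin X C" "C \<subseteq> G" "N \<subseteq> X closure_of C"
          using loc G_def by blast
        have xc: "x \<in> X closure_of C" using NC by blast
        have "openin X (M1 \<inter> M2)" "x \<in> M1 \<inter> M2" using M by auto
        then obtain y where "y \<in> C" "y \<in> M1 \<inter> M2" using xc unfolding in_closure_of by blast
        then show False using side[OF NC(3,4)] M by blast
      qed
    qed
    moreover have "P' \<noteq> {}" "R' \<noteq> {}"
    proof -
      have "P \<subseteq> P'" using cR Po openin_subset by (auto simp: P'_def)
      then show "P' \<noteq> {}" using n1 P_def by blast
      have "R \<subseteq> R'" using cP Ro openin_subset by (auto simp: R'_def)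
      then show "R' \<noteq> {}" using n2 R_def by blast
    qed
    ultimately have False using X unfolding connected_space_def by blast
  }
  then show ?thesis unfolding connectedin G_def by blast
qed



definition rho :: "'a::real_normed_vector \<Rightarrow> real \<Rightarrow> 'a \<Rightarrow> real" where
  "rho c s w = max 0 (1 - dist w c / s)"

definition push :: "'a::real_normed_vector \<Rightarrow> real \<Rightarrow> 'a \<Rightarrow> 'a \<Rightarrow> 'a" where
  "push c s v w = w + rho c s w *\<^sub>R v"

lemma rho_lip: assumes "s > 0" shows "\<bar>rho c s x - rho c s y\<bar> \<le> dist x y / s"
proof -
  have t1: "dist x c \<le> dist x y + dist y c" by (rule dist_triangle)
  have t2: "dist y c \<le> dist x y + dist x c" by (metis dist_triangle dist_commute)
  have a: "\<bar>dist x c - dist y c\<bar> \<le> dist x y" using t1 t2 by linarith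
  have "\<bar>dist x c / s - dist y c / s\<bar> = \<bar>dist x c - dist y c\<bar> / s"
    using assms by (simp add: diff_divide_distrib[symmetric] abs_divide)
  also have "\<dots> \<le> dist x y / s" using a assms by (simp add: divide_right_mono)
  finally have b: "\<bar>dist x c / s - dist y c / s\<bar> \<le> dist x y / s" .
  have "\<bar>max 0 (1 - dist x c / s) - max 0 (1 - dist y c / s)\<bar> \<le> \<bar>dist x c / s - dist y c / s\<bar>"
    by (simp add: max_def abs_if) linarith?
  then show ?thesis unfolding rho_def using b by linarith
qed

lemma rho_nonneg: "0 \<le> rho c s x" by (simp add: rho_def)

lemma push_out: "s > 0 \<Longrightarrow> dist w c \<ge> s \<Longrightarrow> push c s v w = w"
  by (simp add: push_def rho_def)

lemma push_center: "s > 0 \<Longrightarrow> push c s v c = c + v"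
  by (simp add: push_def rho_def)

lemma push_zero: "push c s 0 w = w" by (simp add: push_def)

lemma push_lower:
  assumes "s > 0" "norm v < s"
  shows "dist (push c s v x) (push c s v y) \<ge> (1 - norm v / s) * dist x y"
proof -
  have "norm ((rho c s x - rho c s y) *\<^sub>R v) \<le> dist x y / s * norm v"
    using mult_right_mono[OF rho_lip[OF assms(1), of c x y] norm_ge_zero[of v]] by simp
  moreover have "push c s v x - push c s v y = (x - y) + (rho c s x - rho c s y) *\<^sub>R v"
    by (simp add: push_def algebra_simps)
  moreover have "norm ((x - y) + (rho c s x - rho c s y) *\<^sub>R v) \<ge> norm (x-y) - norm ((rho c s x - rho c s y) *\<^sub>R v)"
    by (metis norm_diff_ineq norm_minus_cancel diff_minus_eq_add)
  ultimately have "dist (push c s v x) (push c s v y) \<ge> dist x y - dist x y / s * norm v"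
    by (simp add: dist_norm)
  then show ?thesis by (simp add: algebra_simps)
qed

lemma push_inj:
  assumes "s > 0" "norm v < s"
  shows "inj (push c s v)"
proof (rule injI)
  fix x y assume "push c s v x = push c s v y"
  then have "(1 - norm v / s) * dist x y \<le> 0" using push_lower[OF assms, where c=c and x=x and y=y] by simp
  moreover have "1 - norm v / s > 0" using assms by (simp add: field_simps)
  ultimately show "x = y" by (simp add: mult_le_0_iff)
qed

lemma push_surj:
  fixes c :: "'a::banach"
  assumes "s > 0" "norm v < s"
  shows "\<exists>x. push c s v x = y"
proof -
  define f where "f x = y - rho c s x *\<^sub>R v" for x
  have "\<forall>x z. dist (f x) (f z) \<le> (norm v / s) * dist x z"
  proof (intro allI)
    fix x z
    have "dist (f x) (f z) = norm ((rho c s z - rho c s x) *\<^sub>R v)" by (simp add: f_def dist_norm algebra_simps)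
    also have "\<dots> \<le> dist z x / s * norm v"
      using mult_right_mono[OF rho_lip[OF assms(1), of c z x] norm_ge_zero[of v]] by simp
    finally show "dist (f x) (f z) \<le> (norm v / s) * dist x z" by (simp add: dist_commute mult.commute)
  qed
  then obtain x where "f x = x" using banach_fix_type[of "norm v / s" f] assms by auto
  then show ?thesis by (auto simp: push_def f_def algebra_simps)
qed

lemma push_cont: "s > 0 \<Longrightarrow> continuous_on UNIV (\<lambda>(t::real, w). push c s (t *\<^sub>R v) w)"
  unfolding push_def rho_def split_def by (intro continuous_intros) auto

lemma push_ball:
  assumes "s > 0" "norm v < s" "dist w c < s"
  shows "dist (push c s v w) c < s"
proof -
  have r: "rho c s w = 1 - dist w c / s" using assms by (simp add: rho_def)
  have "dist (push c s v w) c = norm ((w - c) + rho c s w *\<^sub>R v)"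
    by (simp add: push_def dist_norm algebra_simps)
  also have "\<dots> \<le> norm (w - c) + norm (rho c s w *\<^sub>R v)" by (rule norm_triangle_ineq)
  also have "\<dots> = dist w c + rho c s w * norm v" using rho_nonneg[of c s w] by (simp add: dist_norm)
  also have "\<dots> < dist w c + (1 - dist w c / s) * s"
  proof -
    have "0 < 1 - dist w c / s" using assms by (simp add: field_simps)
    then show ?thesis using r assms by (simp add: mult_strict_left_mono)
  qed
  also have "\<dots> = s" using assms by (simp add: field_simps)
  finally show ?thesis .
qed



definition isot :: "'a topology \<Rightarrow> 'a set \<Rightarrow> (real \<times> 'a \<Rightarrow> 'a) \<Rightarrow> bool" where
 "isot X F K \<longleftrightarrow> continuous_map (prod_topology (top_of_set {0..1::real}) X) X K \<and>
    (\<forall>t\<in>{0..1}. homeomorphic_map X X (\<lambda>x. K(t,x))) \<and>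
    (\<forall>t\<in>{0..1}. \<forall>x \<in> manifold_boundary X \<union> F. K(t,x) = x) \<and>
    (\<forall>x\<in>topspace X. K(0,x) = x)"

lemma cont_glue:
  assumes o: "openin X O1" "openin X O2" and cov: "topspace X \<subseteq> O1 \<union> O2"
    and c: "continuous_map (subtopology X O1) Y f" "continuous_map (subtopology X O2) Y f"
  shows "continuous_map X Y f"
  unfolding continuous_map_def
proof (intro conjI allI impI)
  show "f \<in> topspace X \<rightarrow> topspace Y"
    using c cov unfolding continuous_map_def by (auto simp: Pi_iff)
  fix V assume V: "openin Y V"
  have a: "openin X {x \<in> topspace (subtopology X O1). f x \<in> V}"
    using c(1) V o(1) unfolding continuous_map_def openin_open_subtopology[OF o(1)] by blast
  have b: "openin X {x \<in> topspace (subtopology X O2). f x \<in> V}"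
    using c(2) V o(2) unfolding continuous_map_def openin_open_subtopology[OF o(2)] by blast
  have "{x \<in> topspace X. f x \<in> V} = {x \<in> topspace (subtopology X O1). f x \<in> V} \<union> {x \<in> topspace (subtopology X O2). f x \<in> V}"
    using cov by auto
  then show "openin X {x \<in> topspace X. f x \<in> V}" using a b by auto
qed

lemma iso_id: "isot X F (\<lambda>(t,x). x)"
proof -
  have "homeomorphic_map X X (\<lambda>x. x)" using homeomorphic_map_id[of X X] by (simp add: id_def)
  moreover have "continuous_map (prod_topology (top_of_set {0..1::real}) X) X snd" by (rule continuous_map_snd)
  ultimately show ?thesis unfolding isot_def by (simp add: case_prod_unfold)
qed

lemma iso_comp:
  assumes "isot X F K1" "isot X F K2"
  shows "isot X F (\<lambda>(t,x). K2 (t, K1 (t,x)))"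
proof -
  have c1: "continuous_map (prod_topology (top_of_set {0..1::real}) X) X K1"
   and c2: "continuous_map (prod_topology (top_of_set {0..1::real}) X) X K2" using assms isot_def by blast+
  have "continuous_map (prod_topology (top_of_set {0..1::real}) X) (prod_topology (top_of_set {0..1::real}) X) (\<lambda>p. (fst p, K1 p))"
    using c1 by (intro continuous_intros) auto
  then have "continuous_map (prod_topology (top_of_set {0..1::real}) X) X (K2 \<circ> (\<lambda>p. (fst p, K1 p)))"
    using c2 continuous_map_compose by blast
  then have c: "continuous_map (prod_topology (top_of_set {0..1::real}) X) X (\<lambda>(t,x). K2 (t, K1 (t,x)))"
    by (simp add: o_def case_prod_unfold)
  have h: "homeomorphic_map X X (\<lambda>x. K2 (t, K1 (t,x)))" if "t \<in> {0..1}" for t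
  proof -
    have "homeomorphic_map X X ((\<lambda>x. K2 (t,x)) \<circ> (\<lambda>x. K1 (t,x)))"
      using assms that unfolding isot_def by (metis homeomorphic_map_compose)
    then show ?thesis by (simp add: o_def)
  qed
  have z: "K2 (0, K1 (0,x)) = x" if "x \<in> topspace X" for x
    using assms that unfolding isot_def by auto
  show ?thesis unfolding isot_def using c h z assms unfolding isot_def by auto
qed

lemma pushX:
  assumes X: "compact_space X" "Hausdorff_space X"
    and U: "openin X U" "U \<inter> manifold_boundary X = {}"
    and hm: "homeomorphic_maps (subtopology X U) (top_of_set W) \<phi> \<psi>"
    and s: "s > 0" "cball (c::complex) s \<subseteq> W" "norm v < s"
    and F: "\<forall>y\<in>F\<inter>U. dist (\<phi> y) c \<ge> s"
  shows "\<exists>K. isot X F K \<and> K(1, \<psi> c) = \<psi> (c + v)"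
proof -
  define g where "g t w = push c s (t *\<^sub>R v) w" for t w
  define K where "K = (\<lambda>(t,x). if x \<in> U then \<psi> (g t (\<phi> x)) else x)"
  have Usub: "U \<subseteq> topspace X" using U openin_subset by blast
  have tsU: "topspace (subtopology X U) = U" using Usub by auto
  have cphi: "continuous_map (subtopology X U) (top_of_set W) \<phi>"
   and cpsi: "continuous_map (top_of_set W) (subtopology X U) \<psi>"
   and pp: "\<And>x. x \<in> U \<Longrightarrow> \<psi> (\<phi> x) = x" and qq: "\<And>w. w \<in> W \<Longrightarrow> \<phi> (\<psi> w) = w"
    using hm tsU unfolding homeomorphic_maps_def by auto
  have phiW: "\<And>x. x \<in> U \<Longrightarrow> \<phi> x \<in> W" using cphi tsU by (auto simp: continuous_map_def)
  have psiU: "\<And>w. w \<in> W \<Longrightarrow> \<psi> w \<in> U" using cpsi tsU by (auto simp: continuous_map_def)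
  have nv: "norm (t *\<^sub>R v) < s" if "t \<in> {0..1}" for t
  proof -
    have "norm (t *\<^sub>R v) = t * norm v" using that by simp
    also have "\<dots> \<le> norm v" using that by (simp add: mult_left_le_one_le)
    finally show ?thesis using s by simp
  qed
  have gout: "g t w = w" if "dist w c \<ge> s" for t w using that s by (simp add: g_def push_out)
  have gW: "g t w \<in> W" if wt: "w \<in> W" "t \<in> {0..1}" for t w
  proof (cases "dist w c < s")
    case True
    then have "dist (g t w) c < s" using push_ball[OF s(1) nv[OF wt(2)]] by (simp add: g_def)
    then show ?thesis using s(2) by (auto simp: dist_commute)
  next
    case False then show ?thesis using gout wt by simp
  qed
  have ginj: "inj (g t)" if "t \<in> {0..1}" for t
    using push_inj[OF s(1) nv[OF that]] by (simp add: g_def[abs_def])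
  have gsurj: "\<exists>w\<in>W. g t w = y" if yt: "y \<in> W" "t \<in> {0..1}" for t y
  proof -
    obtain w where w: "g t w = y" using push_surj[OF s(1) nv[OF yt(2)]] g_def by metis
    show ?thesis
    proof (cases "dist w c < s")
      case True
      then have "w \<in> W" using s(2) by (auto simp: dist_commute)
      then show ?thesis using w by blast
    next
      case False
      then have "g t w = w" using gout by simp
      then have "w = y" using w by simp
      then show ?thesis using w yt by blast
    qed
  qed
  define C where "C = \<psi> ` cball c s"
  have CU: "C \<subseteq> U" using psiU s(2) C_def by auto
  have Ccl: "closedin X C"
  proof -
    have "compactin (top_of_set W) (cball c s)" using s(2) by (simp add: compactin_subtopology)
    then have "compactin (subtopology X U) C" unfolding C_def using image_compactin cpsi by blast
    then have "compactin X C" by (simp add: compactin_subtopology)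
    then show ?thesis using X(2) compactin_imp_closedin by blast
  qed
  have Kid: "K (t,x) = x" if "x \<notin> C" for t x
  proof (cases "x \<in> U")
    case True
    then have "\<phi> x \<notin> cball c s" using that pp C_def by force
    then show ?thesis using True gout pp by (auto simp: K_def dist_commute)
  next
    case False then show ?thesis by (simp add: K_def)
  qed
  let ?I = "top_of_set {0..1::real}"
  let ?P = "prod_topology ?I X"
  have contK: "continuous_map ?P X K"
  proof (rule cont_glue[of _ "{0..1} \<times> U" "{0..1} \<times> (topspace X - C)"])
    show "openin ?P ({0..1} \<times> U)" using U by (simp add: openin_prod_Times_iff)
    show "openin ?P ({0..1} \<times> (topspace X - C))" using Ccl by (simp add: openin_prod_Times_iff openin_diff)
    show "topspace ?P \<subseteq> {0..1} \<times> U \<union> {0..1} \<times> (topspace X - C)" using CU by auto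
    have "continuous_map (prod_topology ?I (subtopology X U)) (prod_topology euclidean euclidean) (\<lambda>p. (fst p, \<phi> (snd p)))"
      by (intro continuous_intros continuous_map_into_fulltopology[OF continuous_map_fst] continuous_map_compose[OF continuous_map_snd continuous_map_into_fulltopology[OF cphi], unfolded o_def])
    then have "continuous_map (prod_topology ?I (subtopology X U)) euclidean (\<lambda>p. (fst p, \<phi> (snd p)))" by simp
    moreover have "continuous_map euclidean euclidean (\<lambda>(t, w). g t w)"
      using push_cont[OF s(1)] by (simp add: g_def[abs_def])
    ultimately have "continuous_map (prod_topology ?I (subtopology X U)) euclidean ((\<lambda>(t, w). g t w) \<circ> (\<lambda>p. (fst p, \<phi> (snd p))))"
      using continuous_map_compose by blast
    then have "continuous_map (prod_topology ?I (subtopology X U)) (top_of_set W) (\<lambda>p. g (fst p) (\<phi> (snd p)))"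
      using gW phiW by (auto simp: continuous_map_in_subtopology o_def)
    then have "continuous_map (prod_topology ?I (subtopology X U)) (subtopology X U) (\<psi> \<circ> (\<lambda>p. g (fst p) (\<phi> (snd p))))"
      using cpsi continuous_map_compose by blast
    then have cm: "continuous_map (prod_topology ?I (subtopology X U)) X (\<psi> \<circ> (\<lambda>p. g (fst p) (\<phi> (snd p))))"
      using continuous_map_into_fulltopology by blast
    have eqs: "subtopology ?P ({0..1} \<times> U) = prod_topology ?I (subtopology X U)"
      by (simp add: subtopology_Times subtopology_subtopology)
    show "continuous_map (subtopology ?P ({0..1} \<times> U)) X K"
      unfolding eqs
    proof (rule continuous_map_eq[OF cm])
      fix p assume "p \<in> topspace (prod_topology ?I (subtopology X U))"
      then have "snd p \<in> U" by auto
      then show "(\<psi> \<circ> (\<lambda>p. g (fst p) (\<phi> (snd p)))) p = K p" by (auto simp: K_def case_prod_unfold)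
    qed
    have "continuous_map (subtopology ?P ({0..1} \<times> (topspace X - C))) X snd"
      by (rule continuous_map_from_subtopology) (rule continuous_map_snd)
    then show "continuous_map (subtopology ?P ({0..1} \<times> (topspace X - C))) X K"
      by (rule continuous_map_eq) (auto simp: Kid)
  qed
  have Kt: "homeomorphic_map X X (\<lambda>x. K(t,x))" if t: "t \<in> {0..1}" for t
  proof (rule continuous_imp_homeomorphic_map)
    have "continuous_map X ?P (\<lambda>x. (t, x))" using t by (intro continuous_intros) auto
    then show "continuous_map X X (\<lambda>x. K (t, x))" using contK continuous_map_compose[of X ?P "\<lambda>x. (t,x)" X K] by (simp add: o_def)
    show "compact_space X" "Hausdorff_space X" using X by auto
    show "inj_on (\<lambda>x. K (t, x)) (topspace X)"
    proof (rule inj_onI)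
      fix x y assume xy: "x \<in> topspace X" "y \<in> topspace X" "K (t, x) = K (t, y)"
      show "x = y"
      proof (cases "x \<in> U"; cases "y \<in> U")
        assume "x \<in> U" "y \<in> U"
        then have "\<phi> (\<psi> (g t (\<phi> x))) = \<phi> (\<psi> (g t (\<phi> y)))" using xy by (simp add: K_def)
        then have "g t (\<phi> x) = g t (\<phi> y)" using qq gW phiW t \<open>x \<in> U\<close> \<open>y \<in> U\<close> by metis
        then have "\<phi> x = \<phi> y" using ginj[OF t] by (simp add: inj_eq)
        then show ?thesis using pp \<open>x \<in> U\<close> \<open>y \<in> U\<close> by metis
      next
        assume "x \<in> U" "y \<notin> U"
        then show ?thesis using xy psiU gW phiW t by (auto simp: K_def)
      next
        assume "x \<notin> U" "y \<in> U"
        then show ?thesis using xy psiU gW phiW t by (force simp: K_def)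
      next
        assume "x \<notin> U" "y \<notin> U"
        then show ?thesis using xy by (simp add: K_def)
      qed
    qed
    show "(\<lambda>x. K (t, x)) ` topspace X = topspace X"
    proof
      show "(\<lambda>x. K (t, x)) ` topspace X \<subseteq> topspace X"
        using \<open>continuous_map X X (\<lambda>x. K (t, x))\<close> by (auto simp: continuous_map_def)
      show "topspace X \<subseteq> (\<lambda>x. K (t, x)) ` topspace X"
      proof
        fix y assume y: "y \<in> topspace X"
        show "y \<in> (\<lambda>x. K (t, x)) ` topspace X"
        proof (cases "y \<in> U")
          case True
          then obtain w where w: "w \<in> W" "g t w = \<phi> y" using gsurj phiW t by metis
          have "K (t, \<psi> w) = y" using w psiU qq pp True by (simp add: K_def)
          moreover have "\<psi> w \<in> topspace X" using psiU w Usub by auto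
          ultimately show ?thesis by force
        next
          case False then show ?thesis using y by (force simp: K_def)
        qed
      qed
    qed
  qed
  have Kfix: "K (t,x) = x" if "x \<in> manifold_boundary X \<union> F" for t x
  proof (cases "x \<in> U")
    case True
    then have "x \<in> F" using that U(2) by auto
    then have "dist (\<phi> x) c \<ge> s" using F True by auto
    then show ?thesis using True gout pp by (simp add: K_def)
  next
    case False then show ?thesis by (simp add: K_def)
  qed
  have K0: "K (0, x) = x" for x by (auto simp: K_def g_def push_zero pp)
  have "isot X F K" unfolding isot_def using contK Kt Kfix K0 by auto
  moreover have "K (1, \<psi> c) = \<psi> (c + v)"
  proof -
    have cW: "c \<in> W" using s(1,2) by auto
    then have "\<psi> c \<in> U" "\<phi> (\<psi> c) = c" using psiU qq by auto
    then show ?thesis using push_center[OF s(1), where c=c and v=v] by (simp add: K_def g_def)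
  qed
  ultimately show ?thesis by blast
qed



lemma upper_closure:
  fixes z w :: complex
  assumes "dist z w < r" "0 \<le> Im w" "finite E"
  shows "w \<in> closure (ball z r \<inter> {u. 0 < Im u} - E)"
  unfolding closure_approachable
proof (intro allI impI)
  fix e :: real assume e: "e > 0"
  define d0 where "d0 = min e (r - dist z w)"
  have d0: "d0 > 0" "d0 \<le> e" "d0 \<le> r - dist z w" using e assms by (auto simp: d0_def)
  define y where "y k = w + \<i> * complex_of_real (d0 / (real k + 2))" for k :: nat
  have nn: "norm (\<i> * complex_of_real a) = \<bar>a\<bar>" for a by (simp add: norm_mult)
  have dy: "dist (y k) w = d0 / (real k + 2)" for k
  proof -
    have "dist (y k) w = norm (\<i> * complex_of_real (d0 / (real k + 2)))"
      by (simp add: y_def dist_norm del: of_real_divide)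
    also have "\<dots> = \<bar>d0 / (real k + 2)\<bar>" by (rule nn)
    also have "\<dots> = d0 / (real k + 2)" using d0 by simp
    finally show ?thesis .
  qed
  have dlt: "d0 / (real k + 2) < d0" for k
  proof -
    have "d0 < d0 * (real k + 2)" using d0 by (simp add: algebra_simps add_pos_nonneg)
    then show ?thesis using d0 by (simp add: divide_less_eq)
  qed
  have dpos: "d0 / (real k + 2) > 0" for k using d0 by simp
  have inj: "inj y"
  proof (rule injI)
    fix k l assume "y k = y l"
    then have "d0 / (real k + 2) = d0 / (real l + 2)" by (simp add: y_def)
    then show "k = l" using d0 by (simp add: field_simps)
  qed
  then have "infinite (range y)" by (simp add: finite_image_iff)
  then obtain k where k: "y k \<notin> E" using assms(3)
    by (metis ex_in_conv finite_Diff2 infinite_imp_nonempty rangeE Diff_iff finite.emptyI)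
  have "Im (y k) > 0" using assms(2) dpos[of k] by (simp add: y_def)
  moreover have "dist z (y k) < r"
  proof -
    have "dist z (y k) \<le> dist z w + dist w (y k)" by (rule dist_triangle)
    also have "\<dots> < r" using dy[of k] dlt[of k] d0 by (simp add: dist_commute)
    finally show ?thesis .
  qed
  ultimately have "y k \<in> ball z r \<inter> {u. 0 < Im u} - E" using k by auto
  moreover have "dist (y k) w < e" using dy[of k] dlt[of k] d0 by simp
  ultimately show "\<exists>y\<in>ball z r \<inter> {u. 0 < Im u} - E. dist y w < e" by blast
qed

lemma chart_interior:
  assumes U: "openin X U" and hm: "homeomorphic_maps (subtopology X U) (top_of_set V) \<phi> \<psi>"
    and Oo: "open (Oo::complex set)" "Oo \<subseteq> V"
  shows "openin X {u \<in> U. \<phi> u \<in> Oo}" and "\<And>u. u \<in> U \<Longrightarrow> \<phi> u \<in> Oo \<Longrightarrow> manifold_interior_point X u"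
proof -
  have Usub: "U \<subseteq> topspace X" using U openin_subset by blast
  have tsU: "topspace (subtopology X U) = U" using Usub by auto
  have cphi: "continuous_map (subtopology X U) (top_of_set V) \<phi>" using hm homeomorphic_maps_def by blast
  have "openin (top_of_set V) Oo" using Oo by (simp add: openin_open_eq inf.absorb_iff2 openin_subtopology) (metis inf.absorb_iff2 inf_commute)
  then have "openin (subtopology X U) {u \<in> topspace (subtopology X U). \<phi> u \<in> Oo}"
    using cphi by (simp add: continuous_map_def)
  moreover have "{u \<in> topspace (subtopology X U). \<phi> u \<in> Oo} = {u \<in> U. \<phi> u \<in> Oo}" using tsU by auto
  ultimately show oU: "openin X {u \<in> U. \<phi> u \<in> Oo}" using openin_open_subtopology[OF U] by auto
  fix u assume u: "u \<in> U" "\<phi> u \<in> Oo"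
  let ?U' = "{u \<in> U. \<phi> u \<in> Oo}"
  have phiV: "\<And>x. x \<in> U \<Longrightarrow> \<phi> x \<in> V" using cphi tsU by (auto simp: continuous_map_def)
  have "\<phi> ` (topspace (subtopology X U) \<inter> ?U') = topspace (top_of_set V) \<inter> Oo"
  proof -
    have hmd: "continuous_map (top_of_set V) (subtopology X U) \<psi>" "\<forall>y\<in>topspace (top_of_set V). \<phi> (\<psi> y) = y"
      using hm unfolding homeomorphic_maps_def by auto
    have qq: "\<And>w. w \<in> V \<Longrightarrow> \<phi> (\<psi> w) = w" using hmd(2) by simp
    have psiU: "\<And>w. w \<in> V \<Longrightarrow> \<psi> w \<in> U"
    proof -
      fix w assume "w \<in> V"
      then have "\<psi> w \<in> topspace (subtopology X U)" using continuous_map_image_subset_topspace[OF hmd(1)] by auto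
      then show "\<psi> w \<in> U" using tsU by simp
    qed
    have "\<phi> ` (topspace (subtopology X U) \<inter> ?U') = \<phi> ` ?U'" using tsU by auto
    also have "\<dots> = Oo"
    proof
      show "\<phi> ` ?U' \<subseteq> Oo" by auto
      show "Oo \<subseteq> \<phi> ` ?U'"
      proof
        fix w assume w: "w \<in> Oo"
        then have "w \<in> V" using Oo(2) by auto
        then have "\<psi> w \<in> ?U'" "\<phi> (\<psi> w) = w" using psiU qq w by auto
        then show "w \<in> \<phi> ` ?U'" by (metis image_eqI)
      qed
    qed
    also have "\<dots> = topspace (top_of_set V) \<inter> Oo" using Oo(2) by auto
    finally show ?thesis .
  qed
  then have "homeomorphic_maps (subtopology (subtopology X U) ?U') (subtopology (top_of_set V) Oo) \<phi> \<psi>"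
    using homeomorphic_maps_subtopologies[OF hm] by blast
  moreover have "subtopology (subtopology X U) ?U' = subtopology X ?U'"
    by (simp add: subtopology_subtopology) (metis (no_types, lifting) Collect_conj_eq Int_commute inf_absorb2 mem_Collect_eq subsetI Int_Collect)
  moreover have "subtopology (top_of_set V) Oo = top_of_set Oo" using Oo(2)
    by (simp add: subtopology_subtopology inf.absorb2)
  ultimately have "subtopology X ?U' homeomorphic_space top_of_set Oo"
    using homeomorphic_maps_imp_homeomorphic_space by metis
  then show "manifold_interior_point X u" unfolding manifold_interior_point_def
    using oU u Oo(1) by blast
qed



lemma chart_open:
  assumes U: "openin X U" and hm: "homeomorphic_maps (subtopology X U) (top_of_set V) \<phi> \<psi>"
    and Oo: "open (Oo::complex set)"
  shows "openin X {u \<in> U. \<phi> u \<in> Oo}"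
proof -
  have Usub: "U \<subseteq> topspace X" using U openin_subset by blast
  have tsU: "topspace (subtopology X U) = U" using Usub by auto
  have cphi: "continuous_map (subtopology X U) (top_of_set V) \<phi>" using hm homeomorphic_maps_def by blast
  have phiV: "\<And>x. x \<in> U \<Longrightarrow> \<phi> x \<in> V" using continuous_map_image_subset_topspace[OF cphi] tsU by auto
  have "openin (top_of_set V) (V \<inter> Oo)" using Oo openin_open by blast
  then have "openin (subtopology X U) {u \<in> topspace (subtopology X U). \<phi> u \<in> V \<inter> Oo}"
    using cphi unfolding continuous_map_def by blast
  moreover have "{u \<in> topspace (subtopology X U). \<phi> u \<in> V \<inter> Oo} = {u \<in> U. \<phi> u \<in> Oo}" using tsU phiV by auto
  ultimately show ?thesis using openin_open_subtopology[OF U] by auto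
qed

lemma chart_facts:
  assumes U: "openin X U" and hm: "homeomorphic_maps (subtopology X U) (top_of_set V) \<phi> \<psi>"
  shows "\<And>x. x \<in> U \<Longrightarrow> \<phi> x \<in> V" "\<And>w. w \<in> V \<Longrightarrow> \<psi> w \<in> U"
    "\<And>x. x \<in> U \<Longrightarrow> \<psi> (\<phi> x) = x" "\<And>w. w \<in> V \<Longrightarrow> \<phi> (\<psi> w) = w"
    "continuous_map (top_of_set V) X \<psi>" "U \<subseteq> topspace X"
proof -
  have Usub: "U \<subseteq> topspace X" using U openin_subset by blast
  have tsU: "topspace (subtopology X U) = U" using Usub by auto
  have cphi: "continuous_map (subtopology X U) (top_of_set V) \<phi>" 
   and cpsi: "continuous_map (top_of_set V) (subtopology X U) \<psi>"
   and a: "\<forall>x\<in>topspace (subtopology X U). \<psi> (\<phi> x) = x" and b: "\<forall>y\<in>topspace (top_of_set V). \<phi> (\<psi> y) = y"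
    using hm unfolding homeomorphic_maps_def by blast+
  show "\<And>x. x \<in> U \<Longrightarrow> \<phi> x \<in> V" using continuous_map_image_subset_topspace[OF cphi] tsU by auto
  show "\<And>w. w \<in> V \<Longrightarrow> \<psi> w \<in> U" using continuous_map_image_subset_topspace[OF cpsi] tsU by auto
  show "\<And>x. x \<in> U \<Longrightarrow> \<psi> (\<phi> x) = x" using a tsU by auto
  show "\<And>w. w \<in> V \<Longrightarrow> \<phi> (\<psi> w) = w" using b by auto
  show "continuous_map (top_of_set V) X \<psi>" using cpsi continuous_map_into_fulltopology by blast
  show "U \<subseteq> topspace X" by (rule Usub)
qed

lemma boundary_closed: "closedin X (manifold_boundary X)"
proof -
  have "openin X {x \<in> topspace X. manifold_interior_point X x}"
  proof (subst openin_subopen, intro ballI)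
    fix x assume "x \<in> {x \<in> topspace X. manifold_interior_point X x}"
    then obtain U V where UV: "openin X U" "x \<in> U" "open (V::complex set)" "subtopology X U homeomorphic_space top_of_set V"
      unfolding manifold_interior_point_def by blast
    then obtain \<phi> \<psi> where hm: "homeomorphic_maps (subtopology X U) (top_of_set V) \<phi> \<psi>"
      unfolding homeomorphic_space_def by blast
    have "U \<subseteq> {x \<in> topspace X. manifold_interior_point X x}"
    proof
      fix u assume u: "u \<in> U"
      have "\<phi> u \<in> V" using chart_facts[OF UV(1) hm] u by blast
      then show "u \<in> {x \<in> topspace X. manifold_interior_point X x}"
        using chart_interior(2)[OF UV(1) hm UV(3) order_refl u] u chart_facts(6)[OF UV(1) hm] by auto
    qed
    then show "\<exists>T. openin X T \<and> x \<in> T \<and> T \<subseteq> {x \<in> topspace X. manifold_interior_point X x}"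
      using UV by blast
  qed
  then have "closedin X (topspace X - {x \<in> topspace X. manifold_interior_point X x})" by blast
  moreover have "topspace X - {x \<in> topspace X. manifold_interior_point X x} = manifold_boundary X"
    by (auto simp: manifold_boundary_def)
  ultimately show ?thesis by simp
qed

lemma G_connected:
  assumes cs: "compact_orientable_surface X" and F: "finite F"
  shows "connectedin X (topspace X - (manifold_boundary X \<union> F))"
proof -
  let ?B = "manifold_boundary X"
  define S where "S = ?B \<union> (F \<inter> topspace X)"
  have eq: "topspace X - (?B \<union> F) = topspace X - S" by (auto simp: S_def)
  have H: "Hausdorff_space X" "connected_space X" "surface_with_boundary X"
    using cs compact_orientable_surface_def by blast+
  have Scl: "closedin X S" unfolding S_def
    by (intro closedin_Un boundary_closed closedin_Hausdorff_finite H(1)) (use F in auto)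
  have "connectedin X (topspace X - S)"
  proof (rule conn_complement[OF H(2) Scl])
    fix x assume xS: "x \<in> S"
    then have xt: "x \<in> topspace X" using Scl closedin_subset by blast
    obtain U V where UV: "openin X U" "x \<in> U" "openin (top_of_set {z::complex. 0 \<le> Im z}) V"
      "subtopology X U homeomorphic_space top_of_set V"
      using H(3) xt unfolding surface_with_boundary_def by blast
    then obtain \<phi> \<psi> where hm: "homeomorphic_maps (subtopology X U) (top_of_set V) \<phi> \<psi>"
      unfolding homeomorphic_space_def by blast
    note cf = chart_facts[OF UV(1) hm]
    obtain V0 where V0: "open V0" "V = {z::complex. 0 \<le> Im z} \<inter> V0" using UV(3) openin_open by blast
    define z where "z = \<phi> x"
    have zV: "z \<in> V" using cf(1) UV(2) z_def by blast
    then obtain r where r: "r > 0" "ball z r \<subseteq> V0" using V0 open_contains_ball by blast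
    define E where "E = \<phi> ` (F \<inter> U)"
    have Ef: "finite E" using F E_def by simp
    define Oo where "Oo = ball z r \<inter> {u. 0 < Im u}"
    have "open {u::complex. 0 < Im u}" by (rule open_Collect_less) (intro continuous_intros)+
    then have Oo_open: "open Oo" unfolding Oo_def by (intro open_Int open_ball)
    have OoV: "Oo \<subseteq> V" using r V0 by (auto simp: Oo_def)
    define C where "C = \<psi> ` (Oo - E)"
    define N where "N = {u \<in> U. \<phi> u \<in> ball z r}"
    have "openin X N" unfolding N_def by (rule chart_open[OF UV(1) hm]) simp
    moreover have "x \<in> N" using UV(2) r by (simp add: N_def z_def)
    moreover have "connectedin X C"
    proof -
      have "connected Oo" unfolding Oo_def
        by (intro convex_connected convex_Int convex_ball convex_halfspace_Im_gt)
      then have "connected (Oo - E)"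
        using connected_open_diff_countable[OF _ Oo_open] Ef countable_finite by auto
      then have "connectedin (top_of_set V) (Oo - E)" using OoV by (auto simp: connectedin_subtopology)
      then show ?thesis unfolding C_def using connectedin_continuous_map_image cf(5) by blast
    qed
    moreover have "C \<subseteq> topspace X - S"
    proof
      fix y assume "y \<in> C"
      then obtain w where w: "w \<in> Oo" "w \<notin> E" "y = \<psi> w" by (auto simp: C_def)
      have wV: "w \<in> V" using w OoV by auto
      have yU: "y \<in> U" using cf(2) wV w by simp
      have "\<phi> y = w" using cf(4) wV w by simp
      then have "manifold_interior_point X y" using chart_interior(2)[OF UV(1) hm Oo_open OoV yU] w by simp
      then have "y \<notin> ?B" by (simp add: manifold_boundary_def)
      moreover have "y \<notin> F"
      proof
        assume "y \<in> F"
        then have "\<phi> y \<in> E" using yU by (auto simp: E_def)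
        then show False using w \<open>\<phi> y = w\<close> by simp
      qed
      moreover have "y \<in> topspace X" using yU cf(6) by auto
      ultimately show "y \<in> topspace X - S" by (auto simp: S_def)
    qed
    moreover have "N \<subseteq> X closure_of C"
    proof
      fix u assume u: "u \<in> N"
      define w where "w = \<phi> u"
      have wV: "w \<in> V" using cf(1) u by (simp add: N_def w_def)
      have "w \<in> closure (Oo - E)" unfolding Oo_def
        using upper_closure[of z w r E] u wV V0 Ef by (auto simp: N_def w_def dist_commute)
      moreover have "top_of_set V closure_of (Oo - E) = V \<inter> closure (V \<inter> (Oo - E))"
        by (simp add: closure_of_subtopology)
      moreover have "V \<inter> (Oo - E) = Oo - E" using OoV by auto
      ultimately have "w \<in> top_of_set V closure_of (Oo - E)" using wV by simp
      then have "\<psi> w \<in> X closure_of C"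
        using continuous_map_image_closure_subset[OF cf(5)] unfolding C_def by blast
      then show "u \<in> X closure_of C" using cf(3) u by (simp add: N_def w_def)
    qed
    ultimately show "\<exists>N C. openin X N \<and> x \<in> N \<and> connectedin X C \<and> C \<subseteq> topspace X - S \<and> N \<subseteq> X closure_of C"
      by blast
  qed
  then show ?thesis using eq by simp
qed



lemma local_homog:
  assumes cs: "compact_orientable_surface X" and F: "finite F"
    and q: "q \<in> topspace X - (manifold_boundary X \<union> F)"
  shows "\<exists>N. openin X N \<and> q \<in> N \<and> N \<subseteq> topspace X - (manifold_boundary X \<union> F) \<and>
           (\<forall>p\<in>N. \<forall>p'\<in>N. \<exists>K. isot X F K \<and> K(1,p) = p')"
proof -
  let ?B = "manifold_boundary X"
  have H: "Hausdorff_space X" "compact_space X" using cs compact_orientable_surface_def by blast+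
  have "manifold_interior_point X q" using q by (auto simp: manifold_boundary_def)
  then obtain U W where UW: "openin X U" "q \<in> U" "open (W::complex set)" "subtopology X U homeomorphic_space top_of_set W"
    unfolding manifold_interior_point_def by blast
  then obtain \<phi> \<psi> where hm: "homeomorphic_maps (subtopology X U) (top_of_set W) \<phi> \<psi>"
    unfolding homeomorphic_space_def by blast
  note cf = chart_facts[OF UW(1) hm]
  have UB: "U \<inter> ?B = {}"
  proof -
    have "manifold_interior_point X u" if "u \<in> U" for u
      using chart_interior(2)[OF UW(1) hm UW(3) order_refl that] cf(1) that by blast
    then show ?thesis by (auto simp: manifold_boundary_def)
  qed
  define z where "z = \<phi> q"
  have zW: "z \<in> W" using cf(1) UW(2) z_def by blast
  then obtain s0 where s0: "s0 > 0" "cball z s0 \<subseteq> W" using UW(3) open_contains_cball by blast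
  define E where "E = \<phi> ` (F \<inter> U)"
  have Ef: "finite E" using F E_def by simp
  have zE: "z \<notin> E"
  proof
    assume "z \<in> E"
    then obtain y where "y \<in> F" "y \<in> U" "\<phi> y = \<phi> q" by (auto simp: E_def z_def)
    then have "y = q" using cf(3) UW(2) by metis
    then show False using q \<open>y \<in> F\<close> by auto
  qed
  define s where "s = Min (insert s0 ((\<lambda>e. dist e z) ` E))"
  have s: "s > 0" "s \<le> s0" "\<And>e. e \<in> E \<Longrightarrow> s \<le> dist e z"
    using Ef s0 zE by (auto simp: s_def Min_gr_iff)
  define N where "N = {u \<in> U. \<phi> u \<in> ball z (s/4)}"
  have "openin X N" unfolding N_def by (rule chart_open[OF UW(1) hm]) simp
  moreover have "q \<in> N" using UW(2) s by (simp add: N_def z_def)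
  moreover have NG: "N \<subseteq> topspace X - (?B \<union> F)"
  proof
    fix u assume u: "u \<in> N"
    have "u \<notin> F"
    proof
      assume "u \<in> F"
      then have "\<phi> u \<in> E" using u by (auto simp: E_def N_def)
      then have "s \<le> dist (\<phi> u) z" using s by blast
      moreover have "dist z (\<phi> u) < s/4" using u by (auto simp: N_def)
      ultimately show False using s by (simp add: dist_commute)
    qed
    then show "u \<in> topspace X - (?B \<union> F)" using u UB cf(6) by (auto simp: N_def)
  qed
  moreover have "\<forall>p\<in>N. \<forall>p'\<in>N. \<exists>K. isot X F K \<and> K(1,p) = p'"
  proof (intro ballI)
    fix p p' assume p: "p \<in> N" and p': "p' \<in> N"
    have pU: "p \<in> U" "p' \<in> U" and dp: "dist z (\<phi> p) < s/4" "dist z (\<phi> p') < s/4" using p p' by (auto simp: N_def)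
    have "s/2 > 0" using s by simp
    moreover have "cball (\<phi> p) (s/2) \<subseteq> W"
    proof
      fix y assume "y \<in> cball (\<phi> p) (s/2)"
      then have "dist (\<phi> p) y \<le> s/2" by simp
      then have "dist z y \<le> s0" using dist_triangle[of z y "\<phi> p"] dp s by linarith
      then show "y \<in> W" using s0 by auto
    qed
    moreover have "norm (\<phi> p' - \<phi> p) < s/2"
      using dist_triangle[of "\<phi> p'" "\<phi> p" z] dp by (simp add: dist_norm[symmetric] dist_commute)
    moreover have "\<forall>y\<in>F\<inter>U. dist (\<phi> y) (\<phi> p) \<ge> s/2"
    proof
      fix y assume "y \<in> F \<inter> U"
      then have "s \<le> dist (\<phi> y) z" using s by (auto simp: E_def)
      moreover have "dist (\<phi> y) z \<le> dist (\<phi> y) (\<phi> p) + dist (\<phi> p) z" by (rule dist_triangle)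
      moreover have "dist (\<phi> p) z < s/4" using dp by (simp add: dist_commute)
      ultimately show "dist (\<phi> y) (\<phi> p) \<ge> s/2" using s(1) by linarith
    qed
    ultimately obtain K where K: "isot X F K" "K(1, \<psi> (\<phi> p)) = \<psi> (\<phi> p + (\<phi> p' - \<phi> p))"
      using pushX[OF H(2) H(1) UW(1) UB hm] by blast
    then have "K(1,p) = p'" using cf(3) pU by simp
    then show "\<exists>K. isot X F K \<and> K(1,p) = p'" using K by blast
  qed
  ultimately show ?thesis by blast
qed

lemma homog:
  assumes cs: "compact_orientable_surface X" and F: "finite F"
    and a: "a \<in> topspace X - (manifold_boundary X \<union> F)" and b: "b \<in> topspace X - (manifold_boundary X \<union> F)"
  shows "\<exists>K. isot X F K \<and> K(1,a) = b"
proof -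
  define G where "G = topspace X - (manifold_boundary X \<union> F)"
  define Ca where "Ca = {b \<in> G. \<exists>K. isot X F K \<and> K(1,a) = b}"
  have trans: "\<exists>K. isot X F K \<and> K(1,x) = z" if "isot X F K1" "K1(1,x) = y" "isot X F K2" "K2(1,y) = z" for x y z K1 K2
  proof -
    have "isot X F (\<lambda>(t,x). K2(t, K1(t,x)))" by (rule iso_comp[OF that(1) that(3)])
    moreover have "(\<lambda>(t,x). K2(t, K1(t,x))) (1,x) = z" using that by simp
    ultimately show ?thesis by blast
  qed
  have o1: "openin X Ca"
  proof (subst openin_subopen, intro ballI)
    fix q assume "q \<in> Ca"
    then obtain K0 where K0: "q \<in> G" "isot X F K0" "K0(1,a) = q" by (auto simp: Ca_def)
    obtain N where N: "openin X N" "q \<in> N" "N \<subseteq> G" "\<forall>p\<in>N. \<forall>p'\<in>N. \<exists>K. isot X F K \<and> K(1,p) = p'"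
      using local_homog[OF cs F, of q] K0(1) unfolding G_def by blast
    have "N \<subseteq> Ca"
    proof
      fix p' assume "p' \<in> N"
      then obtain K where "isot X F K" "K(1,q) = p'" using N by blast
      then show "p' \<in> Ca" using trans[OF K0(2,3)] \<open>p' \<in> N\<close> N(3) by (auto simp: Ca_def)
    qed
    then show "\<exists>T. openin X T \<and> q \<in> T \<and> T \<subseteq> Ca" using N by blast
  qed
  have o2: "openin X (G - Ca)"
  proof (subst openin_subopen, intro ballI)
    fix q assume q: "q \<in> G - Ca"
    obtain N where N: "openin X N" "q \<in> N" "N \<subseteq> G" "\<forall>p\<in>N. \<forall>p'\<in>N. \<exists>K. isot X F K \<and> K(1,p) = p'"
      using local_homog[OF cs F, of q] q unfolding G_def by blast
    have "N \<subseteq> G - Ca"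
    proof
      fix p assume p: "p \<in> N"
      show "p \<in> G - Ca"
      proof
        show "p \<in> G" using p N by blast
        show "p \<notin> Ca"
        proof
          assume "p \<in> Ca"
          then obtain K0 where K0: "isot X F K0" "K0(1,a) = p" by (auto simp: Ca_def)
          obtain K where "isot X F K" "K(1,p) = q" using N p by blast
          then have "q \<in> Ca" using trans[OF K0] q by (auto simp: Ca_def)
          then show False using q by blast
        qed
      qed
    qed
    then show "\<exists>T. openin X T \<and> q \<in> T \<and> T \<subseteq> G - Ca" using N by blast
  qed
  have aC: "a \<in> Ca" using iso_id[of X F] a by (auto simp: Ca_def G_def)
  have "connectedin X G" using G_connected[OF cs F] G_def by simp
  then have "\<not>(G \<subseteq> Ca \<union> (G - Ca) \<and> Ca \<inter> (G - Ca) \<inter> G = {} \<and> Ca \<inter> G \<noteq> {} \<and> (G - Ca) \<inter> G \<noteq> {})"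
    using o1 o2 unfolding connectedin by blast
  moreover have "Ca \<inter> G \<noteq> {}" using aC by (auto simp: Ca_def)
  ultimately have "G \<subseteq> Ca" by blast
  then show ?thesis using b by (auto simp: G_def Ca_def)
qed



lemma iso_fix: "isot X F K \<Longrightarrow> t \<in> {0..1} \<Longrightarrow> x \<in> manifold_boundary X \<union> F \<Longrightarrow> K(t,x) = x"
  unfolding isot_def by blast

lemma iso_mono: "isot X F' K \<Longrightarrow> F \<subseteq> F' \<Longrightarrow> isot X F K"
  unfolding isot_def by blast

lemma move:
  assumes cs: "compact_orientable_surface X" and A: "finite A"
  shows "\<And>F. finite F \<Longrightarrow> A \<subseteq> topspace X - manifold_boundary X \<Longrightarrow> \<sigma> ` A \<subseteq> topspace X - manifold_boundary X
     \<Longrightarrow> inj_on \<sigma> A \<Longrightarrow> A \<inter> \<sigma> ` A = {} \<Longrightarrow> F \<inter> (A \<union> \<sigma> ` A) = {}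
     \<Longrightarrow> \<exists>K. isot X F K \<and> (\<forall>a\<in>A. K(1,a) = \<sigma> a)"
  using A
proof (induction A rule: finite_induct)
  case empty
  then show ?case using iso_id by blast
next
  case (insert a A F)
  let ?I = "topspace X - manifold_boundary X"
  have sa: "\<sigma> a \<notin> \<sigma> ` A" using insert.prems(4) insert.hyps(2) by auto
  have a1: "a \<notin> \<sigma> ` A" "\<sigma> a \<notin> A" "a \<noteq> \<sigma> a" using insert.prems(5) by auto
  have aF: "a \<notin> F" "\<sigma> a \<notin> F" using insert.prems(6) by auto
  obtain K1 where K1: "isot X (F \<union> {a, \<sigma> a}) K1" "\<forall>a'\<in>A. K1(1,a') = \<sigma> a'"
  proof -
    have "\<exists>K. isot X (F \<union> {a, \<sigma> a}) K \<and> (\<forall>a\<in>A. K(1,a) = \<sigma> a)"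
    proof (rule insert.IH)
      show "finite (F \<union> {a, \<sigma> a})" using insert.prems(1) by simp
      show "A \<subseteq> ?I" "\<sigma> ` A \<subseteq> ?I" using insert.prems(2,3) by auto
      show "inj_on \<sigma> A" using insert.prems(4) by (simp add: inj_on_insert)
      show "A \<inter> \<sigma> ` A = {}" using insert.prems(5) by auto
      show "(F \<union> {a, \<sigma> a}) \<inter> (A \<union> \<sigma> ` A) = {}" using insert.prems(6) insert.hyps(2) sa a1 by auto
    qed
    then show ?thesis using that by blast
  qed
  obtain K2 where K2: "isot X (F \<union> \<sigma> ` A) K2" "K2(1,a) = \<sigma> a"
  proof -
    have "\<exists>K. isot X (F \<union> \<sigma> ` A) K \<and> K(1,a) = \<sigma> a"
    proof (rule homog[OF cs])
      show "finite (F \<union> \<sigma> ` A)" using insert.prems(1) insert.hyps(1) by simp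
      show "a \<in> topspace X - (manifold_boundary X \<union> (F \<union> \<sigma> ` A))" using insert.prems(2) aF a1 by auto
      show "\<sigma> a \<in> topspace X - (manifold_boundary X \<union> (F \<union> \<sigma> ` A))" using insert.prems(3) aF sa by auto
    qed
    then show ?thesis using that by blast
  qed
  define K where "K = (\<lambda>(t,x). K2 (t, K1 (t,x)))"
  have "isot X F K" unfolding K_def
    by (rule iso_comp) (use K1(1) K2(1) iso_mono in blast)+
  moreover have "K(1,a) = \<sigma> a"
  proof -
    have "K1(1,a) = a" using iso_fix[OF K1(1)] by simp
    then show ?thesis using K2(2) by (simp add: K_def)
  qed
  moreover have "K(1,a') = \<sigma> a'" if "a' \<in> A" for a'
  proof -
    have "K1(1,a') = \<sigma> a'" using K1(2) that by blast
    moreover have "K2(1, \<sigma> a') = \<sigma> a'" using iso_fix[OF K2(1)] that by simp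
    ultimately show ?thesis by (simp add: K_def)
  qed
  ultimately show ?case by blast
qed



lemma pisotopic_refl:
  assumes "admissible X Q p" shows "pisotopic X Q p p"
  unfolding pisotopic_def
proof (intro conjI exI[of _ "\<lambda>(t,x). fst p x"])
  have "continuous_map X X (fst p)" using assms homeomorphic_imp_continuous_map by (auto simp: admissible_def)
  then have "continuous_map (prod_topology (top_of_set {0..1::real}) X) X (fst p \<circ> snd)"
    using continuous_map_compose continuous_map_snd by blast
  then show "continuous_map (prod_topology (top_of_set {0..1::real}) X) X (\<lambda>(t,x). fst p x)"
    by (simp add: o_def case_prod_unfold)
  show "\<forall>t\<in>{0..1}. admissible X Q (\<lambda>x. (\<lambda>(t, x). fst p x) (t, x), snd p)"
    using assms by (simp add: admissible_def)
qed auto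

theorem mainTheorem6:
  fixes X :: "'a topology" and Q :: "'a set"
  assumes "compact_orientable_surface X"
    and "finite Q"
    and "Q \<subseteq> topspace X - manifold_boundary X"
  shows "(\<forall>p. admissible X Q p \<longrightarrow>
            (\<exists>e u. pidempotent X Q e \<and> punit X Q u \<and> pisotopic X Q p (pcomp e u)))
       \<and> (\<forall>e u. pidempotent X Q e \<longrightarrow> punit X Q u \<longrightarrow> admissible X Q (pcomp e u))"
proof (intro conjI allI impI)
  note cs = assms(1) and Qf = assms(2) and QI = assms(3)
  let ?B = "manifold_boundary X"
  fix e u assume e: "pidempotent X Q e" and u: "punit X Q u"
  have ae: "admissible X Q e" and au: "admissible X Q u" using e u by (auto simp: pidempotent_def punit_def)
  show "admissible X Q (pcomp e u)"
    unfolding admissible_def pcomp_def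
  proof (intro conjI)
    show "homeomorphic_map X X (fst (fst e \<circ> fst u, {d \<in> snd u. fst u d \<in> snd e}))"
      using ae au homeomorphic_map_compose by (auto simp: admissible_def)
    show "\<forall>x\<in>?B. fst (fst e \<circ> fst u, {d \<in> snd u. fst u d \<in> snd e}) x = x"
      using ae au by (auto simp: admissible_def)
    show "snd (fst e \<circ> fst u, {d \<in> snd u. fst u d \<in> snd e}) \<subseteq> Q"
      using au by (auto simp: admissible_def)
    show "fst (fst e \<circ> fst u, {d \<in> snd u. fst u d \<in> snd e}) ` snd (fst e \<circ> fst u, {d \<in> snd u. fst u d \<in> snd e}) \<subseteq> Q"
      using ae by (auto simp: admissible_def)
  qed
next
  note cs = assms(1) and Qf = assms(2) and QI = assms(3)
  let ?B = "manifold_boundary X"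
  fix p assume ap: "admissible X Q p"
  obtain f D where p: "p = (f, D)" by (cases p)
  have fh: "homeomorphic_map X X f" and fB: "\<And>x. x \<in> ?B \<Longrightarrow> f x = x" and DQ: "D \<subseteq> Q" and fDQ: "f ` D \<subseteq> Q"
    using ap p by (auto simp: admissible_def)
  have finj: "inj_on f (topspace X)" using homeomorphic_imp_injective_map[OF fh] .
  have fsurj: "f ` topspace X = topspace X" using homeomorphic_imp_surjective_map[OF fh] .
  have Qt: "Q \<subseteq> topspace X" using QI by auto
  have fI: "f x \<in> topspace X - ?B" if "x \<in> topspace X - ?B" for x
  proof -
    have ft: "f x \<in> topspace X" using that fsurj by auto
    moreover have "f x \<notin> ?B"
    proof
      assume "f x \<in> ?B"
      then have "f (f x) = f x" using fB by blast
      then have "f x = x" using finj ft that by (auto dest: inj_onD)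
      then show False using that \<open>f x \<in> ?B\<close> by auto
    qed
    ultimately show ?thesis by blast
  qed
  define A0 where "A0 = f ` (Q - D)"
  define B0 where "B0 = Q - f ` D"
  have A0f: "finite A0" "finite B0" using Qf by (auto simp: A0_def B0_def)
  have cA0: "card A0 = card (Q - D)"
    unfolding A0_def by (rule card_image, rule inj_on_subset[OF finj]) (use Qt in auto)
  have cfD: "card (f ` D) = card D"
    by (rule card_image, rule inj_on_subset[OF finj]) (use Qt DQ in auto)
  have "card B0 = card Q - card (f ` D)" unfolding B0_def
    using card_Diff_subset[OF finite_subset[OF fDQ Qf] fDQ] .
  moreover have "card (Q - D) = card Q - card D" using card_Diff_subset[OF finite_subset[OF DQ Qf] DQ] .
  ultimately have cAB: "card A0 = card B0" using cA0 cfD by linarith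
  have "card (A0 - B0) = card (B0 - A0)"
  proof -
    have "card (A0 - B0) = card A0 - card (A0 \<inter> B0)" by (rule card_Diff_subset_Int) (use A0f in auto)
    moreover have "card (B0 - A0) = card B0 - card (B0 \<inter> A0)" by (rule card_Diff_subset_Int) (use A0f in auto)
    ultimately show ?thesis using cAB by (simp add: Int_commute)
  qed
  then obtain \<sigma> where \<sigma>: "bij_betw \<sigma> (A0 - B0) (B0 - A0)"
    using finite_same_card_bij A0f by (meson finite_Diff)
  define F where "F = f ` D \<union> (A0 \<inter> B0)"
  have Ff: "finite F" using Qf DQ A0f by (auto simp: F_def intro: finite_subset)
  have A0I: "A0 \<subseteq> topspace X - ?B" using fI QI by (auto simp: A0_def)
  have fDA0: "f ` D \<inter> A0 = {}"
  proof -
    { fix d q assume "d \<in> D" "q \<in> Q - D" "f d = f q"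
      then have "d = q" using finj Qt DQ by (auto dest: inj_onD)
      then have False using \<open>d \<in> D\<close> \<open>q \<in> Q - D\<close> by auto }
    then show ?thesis by (auto simp: A0_def)
  qed
  obtain K where K: "isot X F K" "\<forall>a\<in>A0 - B0. K(1,a) = \<sigma> a"
  proof -
    have "\<exists>K. isot X F K \<and> (\<forall>a\<in>A0 - B0. K(1,a) = \<sigma> a)"
    proof (rule move[OF cs _ Ff])
      show "finite (A0 - B0)" using A0f by simp
      show "A0 - B0 \<subseteq> topspace X - ?B" using A0I by auto
      show "\<sigma> ` (A0 - B0) \<subseteq> topspace X - ?B" using bij_betw_imp_surj_on[OF \<sigma>] QI by (auto simp: B0_def)
      show "inj_on \<sigma> (A0 - B0)" using \<sigma> bij_betw_def by blast
      show "(A0 - B0) \<inter> \<sigma> ` (A0 - B0) = {}" using bij_betw_imp_surj_on[OF \<sigma>] by auto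
      show "F \<inter> (A0 - B0 \<union> \<sigma> ` (A0 - B0)) = {}"
        using bij_betw_imp_surj_on[OF \<sigma>] fDA0 by (auto simp: F_def B0_def)
    qed
    then show ?thesis using that by blast
  qed
  have Kc: "continuous_map (prod_topology (top_of_set {0..1::real}) X) X K"
   and Kh: "\<And>t. t \<in> {0..1} \<Longrightarrow> homeomorphic_map X X (\<lambda>x. K(t,x))"
   and Kf: "\<And>t x. t \<in> {0..1} \<Longrightarrow> x \<in> ?B \<union> F \<Longrightarrow> K(t,x) = x"
   and K0: "\<And>x. x \<in> topspace X \<Longrightarrow> K(0,x) = x"
    using K(1) unfolding isot_def by blast+
  define g where "g x = K(1, f x)" for x
  have gh: "homeomorphic_map X X g"
    using homeomorphic_map_compose[OF fh Kh[of 1]] by (simp add: g_def[abs_def] o_def)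
  have ginj: "inj_on g (topspace X)" using homeomorphic_imp_injective_map[OF gh] .
  have gB: "g x = x" if "x \<in> ?B" for x using fB[OF that] Kf[of 1 x] that by (simp add: g_def)
  have gD: "g d = f d" if "d \<in> D" for d using Kf[of 1 "f d"] that by (simp add: g_def F_def)
  have gQ: "g ` Q = Q"
  proof
    show "g ` Q \<subseteq> Q"
    proof
      fix y assume "y \<in> g ` Q"
      then obtain q where q: "q \<in> Q" "y = g q" by blast
      show "y \<in> Q"
      proof (cases "q \<in> D")
        case True then show ?thesis using q gD fDQ by auto
      next
        case False
        then have fq: "f q \<in> A0" using q by (auto simp: A0_def)
        show ?thesis
        proof (cases "f q \<in> B0")
          case True
          then have "g q = f q" using Kf[of 1 "f q"] fq by (simp add: g_def F_def)
          then show ?thesis using q True by (simp add: B0_def)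
        next
          case False
          then have "g q = \<sigma> (f q)" using K(2) fq by (simp add: g_def)
          moreover have "\<sigma> (f q) \<in> B0 - A0" using bij_betw_apply[OF \<sigma>] fq False by blast
          ultimately show ?thesis using q by (simp add: B0_def)
        qed
      qed
    qed
    show "Q \<subseteq> g ` Q"
    proof
      fix y assume y: "y \<in> Q"
      show "y \<in> g ` Q"
      proof (cases "y \<in> f ` D")
        case True
        then obtain d where "d \<in> D" "y = f d" by blast
        then show ?thesis using gD DQ by (metis image_eqI subsetD)
      next
        case False
        then have yB: "y \<in> B0" using y by (simp add: B0_def)
        show ?thesis
        proof (cases "y \<in> A0")
          case True
          then obtain q where q: "q \<in> Q - D" "y = f q" by (auto simp: A0_def)
          have "g q = y" using Kf[of 1 y] True yB q by (simp add: g_def F_def)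
          then show ?thesis using q by blast
        next
          case False
          then have "y \<in> \<sigma> ` (A0 - B0)" using bij_betw_imp_surj_on[OF \<sigma>] yB by auto
          then obtain a where a: "a \<in> A0 - B0" "y = \<sigma> a" by blast
          then obtain q where q: "q \<in> Q - D" "a = f q" by (auto simp: A0_def)
          have "g q = y" using K(2) a q by (simp add: g_def)
          then show ?thesis using q by blast
        qed
      qed
    qed
  qed
  define e where "e = ((id :: 'a \<Rightarrow> 'a), f ` D)"
  define u where "u = (g, Q)"
  have ae: "admissible X Q e" using fDQ by (simp add: admissible_def e_def)
  have "pcomp e e = e" by (simp add: pcomp_def e_def)
  then have "pidempotent X Q e" using pisotopic_refl[OF ae] ae by (simp add: pidempotent_def)
  moreover have "punit X Q u" using gh gB gQ by (simp add: punit_def admissible_def u_def)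
  moreover have "pisotopic X Q p (pcomp e u)"
  proof -
    have snd_eq: "{d \<in> Q. g d \<in> f ` D} = D"
    proof
      show "D \<subseteq> {d \<in> Q. g d \<in> f ` D}" using gD DQ by auto
      show "{d \<in> Q. g d \<in> f ` D} \<subseteq> D"
      proof
        fix d assume "d \<in> {d \<in> Q. g d \<in> f ` D}"
        then obtain d' where d: "d \<in> Q" "d' \<in> D" "g d = f d'" by blast
        then have "g d = g d'" using gD by simp
        then have "d = d'" using ginj Qt DQ d by (auto dest: inj_onD)
        then show "d \<in> D" using d by simp
      qed
    qed
    have pc: "pcomp e u = (g, D)" using snd_eq by (simp add: pcomp_def e_def u_def)
    show ?thesis unfolding pc p pisotopic_def
    proof (intro conjI exI[of _ "\<lambda>(t,x). K(t, f x)"])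
      have "continuous_map (prod_topology (top_of_set {0..1::real}) X) (prod_topology (top_of_set {0..1::real}) X) (\<lambda>q. (fst q, f (snd q)))"
        using homeomorphic_imp_continuous_map[OF fh]
        by (intro continuous_intros continuous_map_compose[OF continuous_map_snd, unfolded o_def]) auto
      then have "continuous_map (prod_topology (top_of_set {0..1::real}) X) X (K \<circ> (\<lambda>q. (fst q, f (snd q))))"
        using Kc continuous_map_compose by blast
      then show "continuous_map (prod_topology (top_of_set {0..1::real}) X) X (\<lambda>(t,x). K(t, f x))"
        by (simp add: o_def case_prod_unfold)
      show "\<forall>t\<in>{0..1}. admissible X Q (\<lambda>x. (\<lambda>(t,x). K(t, f x)) (t, x), snd (f, D))"
      proof
        fix t :: real assume t: "t \<in> {0..1}"
        have "homeomorphic_map X X (\<lambda>x. K(t, f x))"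
          using homeomorphic_map_compose[OF fh Kh[OF t]] by (simp add: o_def)
        moreover have "\<forall>x\<in>?B. K(t, f x) = x" using fB Kf[OF t] by simp
        moreover have "(\<lambda>x. K(t, f x)) ` D \<subseteq> Q" using Kf[OF t] fDQ by (auto simp: F_def)
        ultimately show "admissible X Q (\<lambda>x. (\<lambda>(t,x). K(t, f x)) (t, x), snd (f, D))"
          using DQ by (simp add: admissible_def)
      qed
      show "\<forall>x\<in>topspace X. (\<lambda>(t,x). K(t, f x)) (0, x) = fst (f, D) x \<and> (\<lambda>(t,x). K(t, f x)) (1, x) = fst (g, D) x"
        using K0 fsurj by (auto simp: g_def)
    qed simp
  qed
  ultimately show "\<exists>e u. pidempotent X Q e \<and> punit X Q u \<and> pisotopic X Q p (pcomp e u)" by blast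
qed


end
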